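(* Assume the balanced case $\beta_0=C$, $A>0$ and $\Delta=B^2-4AC>0$, and let $r_{1,2}=\frac{-B\pm\sqrt\Delta}{2A}$ with $r_1<r_2$. Then, as an identity of analytic functions for $t$ near $0$ (principal power, equal to $1$ at $t=0$), \[ w(x,t)=\exp\bigl[(\alpha_0r_1+\gamma_0)t\bigr]\left[\frac{r_1-r_2}{(x-r_2)-(x-r_1)\exp(A(r_1-r_2)t)}\right]^{\alpha_0/A}. \]
   Context: Fix nonnegative integers $a,b,c,\alpha_0,\beta_0,\gamma_0$, $\alpha_k=ak+\alpha_0$, $\beta_k=bk+\beta_0$, $\gamma_k=ck+\gamma_0$; $w_{0,0}=1$, $w_{n,k}=0$ for $k<0$ or $k>n$, $w_{n+1,k}=\alpha_{k-1}w_{n,k-1}+\gamma_k w_{n,k}+\beta_k w_{n,k+1}$. $A=a$, $B=c$, $C=b$; balanced means $\beta_0=C$. $P_n(x)=\sum_k w_{n,k}x^k$, $w(x,t)=\sum_{n\ge0}P_n(x)t^n/n!$. *)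

theory Defs
  imports "HOL-Analysis.Analysis"
begin

text \<open>The triangle w(n,k) with alpha_k = a k + alpha0, beta_k = b k + beta0,
  gamma_k = c k + gamma0; w(0,0)=1, w(n,k)=0 for k<0 or k>n.\<close>

fun wtri :: "nat \<Rightarrow> nat \<Rightarrow> nat \<Rightarrow> nat \<Rightarrow> nat \<Rightarrow> nat \<Rightarrow> nat \<Rightarrow> int \<Rightarrow> int" where
  "wtri a b c al0 be0 ga0 0 k = (if k = 0 then 1 else 0)"
| "wtri a b c al0 be0 ga0 (Suc n) k =
     (if k < 0 \<or> k > int (Suc n) then 0
      else (int a * (k - 1) + int al0) * wtri a b c al0 be0 ga0 n (k - 1)
         + (int c * k + int ga0) * wtri a b c al0 be0 ga0 n k
         + (int b * k + int be0) * wtri a b c al0 be0 ga0 n (k + 1))"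

definition Ppoly :: "nat \<Rightarrow> nat \<Rightarrow> nat \<Rightarrow> nat \<Rightarrow> nat \<Rightarrow> nat \<Rightarrow> nat \<Rightarrow> complex \<Rightarrow> complex" where
  "Ppoly a b c al0 be0 ga0 n x = (\<Sum>k\<le>n. of_int (wtri a b c al0 be0 ga0 n (int k)) * x ^ k)"

end

theory Submission imports Defs "HOL-Complex_Analysis.Complex_Analysis" begin

lemma wtri_neg: "k < 0 \<Longrightarrow> wtri a b c al0 be0 ga0 n k = 0"
  by (cases n) auto

lemma wtri_big: "k > int n \<Longrightarrow> wtri a b c al0 be0 ga0 n k = 0"
  by (cases n) auto

definition Pd :: "nat \<Rightarrow> nat \<Rightarrow> nat \<Rightarrow> nat \<Rightarrow> nat \<Rightarrow> nat \<Rightarrow> nat \<Rightarrow> complex \<Rightarrow> complex" where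
  "Pd a b c al0 be0 ga0 n x = (\<Sum>k\<le>n. of_int (wtri a b c al0 be0 ga0 n (int k)) * (of_nat k * x ^ (k - 1)))"

lemma Ppoly_deriv: "(Ppoly a b c al0 be0 ga0 n has_field_derivative Pd a b c al0 be0 ga0 n x) (at x)"
  unfolding Ppoly_def[abs_def] Pd_def
  by (auto intro!: derivative_eq_intros DERIV_sum)

lemma Ppoly_rec:
  assumes "be0 = b"
  shows "Ppoly a b c al0 be0 ga0 (Suc n) y =
    (of_nat a * y^2 + of_nat c * y + of_nat b) * Pd a b c al0 be0 ga0 n y
    + (of_nat al0 * y + of_nat ga0) * Ppoly a b c al0 be0 ga0 n y"
proof -
  let ?w = "wtri a b c al0 be0 ga0 n"
  have e: "Ppoly a b c al0 be0 ga0 (Suc n) y =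
     (\<Sum>k\<le>Suc n. of_int ((int a * (int k - 1) + int al0) * ?w (int k - 1)) * y^k)
   + (\<Sum>k\<le>Suc n. of_int ((int c * int k + int ga0) * ?w (int k)) * y^k)
   + (\<Sum>k\<le>Suc n. of_int ((int b * int k + int be0) * ?w (int k + 1)) * y^k)"
    unfolding Ppoly_def by (simp add: sum.distrib[symmetric] algebra_simps)
  have t1: "(\<Sum>k\<le>Suc n. of_int ((int a * (int k - 1) + int al0) * ?w (int k - 1)) * y^k)
     = of_nat a * y^2 * Pd a b c al0 be0 ga0 n y + of_nat al0 * y * Ppoly a b c al0 be0 ga0 n y"
  proof -
    have "(\<Sum>k\<le>Suc n. of_int ((int a * (int k - 1) + int al0) * ?w (int k - 1)) * y^k)
      = (\<Sum>k\<le>n. of_int ((int a * int k + int al0) * ?w (int k)) * y^Suc k)"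
      by (subst sum.atMost_Suc_shift) (simp add: wtri_neg)
    also have "\<dots> = (\<Sum>k\<le>n. of_nat a * y^2 * (of_int (?w (int k)) * (of_nat k * y ^ (k - 1)))
          + of_nat al0 * y * (of_int (?w (int k)) * y^k))"
      apply (intro sum.cong refl)
      subgoal for k by (cases k) (auto simp: algebra_simps power2_eq_square)
      done
    finally show ?thesis unfolding Pd_def Ppoly_def by (simp add: sum.distrib sum_distrib_left)
  qed
  have t2: "(\<Sum>k\<le>Suc n. of_int ((int c * int k + int ga0) * ?w (int k)) * y^k)
     = of_nat c * y * Pd a b c al0 be0 ga0 n y + of_nat ga0 * Ppoly a b c al0 be0 ga0 n y"
  proof -
    have "(\<Sum>k\<le>Suc n. of_int ((int c * int k + int ga0) * ?w (int k)) * y^k)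
      = (\<Sum>k\<le>n. of_int ((int c * int k + int ga0) * ?w (int k)) * y^k)"
      by (simp add: wtri_big)
    also have "\<dots> = (\<Sum>k\<le>n. of_nat c * y * (of_int (?w (int k)) * (of_nat k * y ^ (k - 1)))
          + of_nat ga0 * (of_int (?w (int k)) * y^k))"
      apply (intro sum.cong refl)
      subgoal for k by (cases k) (auto simp: algebra_simps)
      done
    finally show ?thesis unfolding Pd_def Ppoly_def by (simp add: sum.distrib sum_distrib_left)
  qed
  have t3: "(\<Sum>k\<le>Suc n. of_int ((int b * int k + int be0) * ?w (int k + 1)) * y^k)
     = of_nat b * Pd a b c al0 be0 ga0 n y"
  proof -
    let ?h = "\<lambda>k. of_int (?w (int k)) * (of_nat k * y ^ (k - 1)) :: complex"
    have "(\<Sum>k\<le>n. ?h k) = (\<Sum>k\<le>Suc (Suc n). ?h k)"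
      by (simp add: wtri_big)
    also have "\<dots> = (\<Sum>k\<le>Suc n. ?h (Suc k))"
      by (subst sum.atMost_Suc_shift) simp
    finally have "of_nat b * Pd a b c al0 be0 ga0 n y = of_nat b * (\<Sum>k\<le>Suc n. ?h (Suc k))"
      unfolding Pd_def by simp
    also have "\<dots> = (\<Sum>k\<le>Suc n. of_int ((int b * int k + int be0) * ?w (int k + 1)) * y^k)"
      unfolding sum_distrib_left using assms
      by (intro sum.cong refl) (simp add: algebra_simps)
    finally show ?thesis by simp
  qed
  show ?thesis unfolding e t1 t2 t3 by (simp add: algebra_simps)
qed

theorem mainTheorem7:
  fixes a b c al0 be0 ga0 :: nat
  assumes balanced: "be0 = b"
    and Apos: "a > 0"
    and Delta: "real c ^ 2 - 4 * real a * real b > 0"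
  defines "r1 \<equiv> (- real c - sqrt (real c ^ 2 - 4 * real a * real b)) / (2 * real a)"
    and "r2 \<equiv> (- real c + sqrt (real c ^ 2 - 4 * real a * real b)) / (2 * real a)"
  shows "\<forall>x::complex. \<exists>\<epsilon>>0. \<forall>t::complex. norm t < \<epsilon> \<longrightarrow>
     (\<lambda>n. Ppoly a b c al0 be0 ga0 n x * t ^ n / of_nat (fact n)) sums
       (exp (complex_of_real (real al0 * r1 + real ga0) * t) *
        ((complex_of_real (r1 - r2) /
          ((x - complex_of_real r2) - (x - complex_of_real r1) * exp (complex_of_real (real a * (r1 - r2)) * t)))
         powr complex_of_real (real al0 / real a)))"
proof
  fix x :: complex
  define sq where "sq = sqrt (real c ^ 2 - 4 * real a * real b)"
  have sqpos: "sq > 0" using Delta unfolding sq_def by simp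
  have sq2: "sq^2 = real c ^ 2 - 4 * real a * real b" using Delta unfolding sq_def by simp
  have ar: "real a > 0" using Apos by simp
  have r12: "r1 < r2" unfolding r1_def r2_def sq_def[symmetric] using sqpos ar
    by (simp add: divide_strict_right_mono)
  have rsum: "r1 + r2 = - real c / real a" unfolding r1_def r2_def sq_def[symmetric] using ar
    by (simp add: field_simps)
  have rprod: "r1 * r2 = real b / real a"
  proof -
    have "r1 * r2 = (real c ^ 2 - sq ^ 2) / (4 * real a ^ 2)" unfolding r1_def r2_def sq_def[symmetric] using ar
      by (simp add: field_simps power2_eq_square)
    also have "\<dots> = real b / real a" unfolding sq2 using ar by (simp add: field_simps power2_eq_square)
    finally show ?thesis .
  qed
  define R1 where "R1 = complex_of_real r1"
  define R2 where "R2 = complex_of_real r2"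
  define dd where "dd = R1 - R2"
  have ddnz: "dd \<noteq> 0" unfolding dd_def R1_def R2_def using r12 by simp
  have qfac: "of_nat a * y^2 + of_nat c * y + of_nat b = of_nat a * (y - R1) * (y - R2)" for y :: complex
  proof -
    have "complex_of_real (r1 + r2) = - of_nat c / of_nat a" using rsum by simp
    hence s1: "R1 + R2 = - of_nat c / of_nat a" unfolding R1_def R2_def by simp
    have "complex_of_real (r1 * r2) = of_nat b / of_nat a" using rprod by simp
    hence s2: "R1 * R2 = of_nat b / of_nat a" unfolding R1_def R2_def by simp
    have "of_nat a * (y - R1) * (y - R2) = of_nat a * y^2 - of_nat a * (R1 + R2) * y + of_nat a * (R1 * R2)"
      by (simp add: algebra_simps power2_eq_square)
    also have "\<dots> = of_nat a * y^2 + of_nat c * y + of_nat b" unfolding s1 s2 using Apos by simp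
    finally show ?thesis by simp
  qed
  define \<kappa> where "\<kappa> = complex_of_real (real a * (r1 - r2))"
  have \<kappa>: "\<kappa> = of_nat a * dd" unfolding \<kappa>_def dd_def R1_def R2_def by simp
  define E where "E = (\<lambda>t. exp (\<kappa> * t))"
  define D where "D = (\<lambda>t. (x - R2) - (x - R1) * E t)"
  define B where "B = (\<lambda>t. complex_of_real (r1 - r2) / D t)"
  have B': "B = (\<lambda>t. dd / D t)" unfolding B_def dd_def R1_def R2_def by simp
  define lam where "lam = complex_of_real (real al0 * r1 + real ga0)"
  define s where "s = complex_of_real (real al0 / real a)"
  define \<phi> where "\<phi> = (\<lambda>t. R2 + dd * (x - R2) / D t)"
  define f where "f = (\<lambda>t. exp (lam * t + s * Ln (B t)))"
  have D0: "D 0 = dd" unfolding D_def E_def dd_def by simp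
  have B0: "B 0 = 1" unfolding B' D0 using ddnz by simp
  have "isCont B 0" unfolding B' D_def E_def using D0 ddnz
    by (auto intro!: continuous_intros simp: D_def E_def)
  then obtain \<epsilon> where ep: "\<epsilon> > 0" and epB: "\<And>t. dist t 0 < \<epsilon> \<Longrightarrow> dist (B t) 1 < 1"
    unfolding continuous_at_eps_delta B0 by (metis zero_less_one)
  define S where "S = ball (0::complex) \<epsilon>"
  have oS: "open S" unfolding S_def by simp
  have Sprop: "Re (B t) > 0 \<and> B t \<noteq> 0 \<and> D t \<noteq> 0 \<and> B t \<notin> \<real>\<^sub>\<le>\<^sub>0" if "t \<in> S" for t
  proof -
    have "dist (B t) 1 < 1" using epB that unfolding S_def by (simp add: dist_commute)
    hence "norm (B t - 1) < 1" by (simp add: dist_norm)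
    hence "\<bar>Re (B t - 1)\<bar> < 1" using abs_Re_le_cmod le_less_trans by blast
    hence re: "Re (B t) > 0" by simp
    hence "B t \<noteq> 0" by auto
    moreover have "D t \<noteq> 0" using \<open>B t \<noteq> 0\<close> unfolding B' by auto
    ultimately show ?thesis using re by (auto simp: complex_nonpos_Reals_iff)
  qed
  have dE: "(E has_field_derivative \<kappa> * E t) (at t)" for t
    unfolding E_def by (auto intro!: derivative_eq_intros)
  have dD: "(D has_field_derivative - (x - R1) * (\<kappa> * E t)) (at t)" for t
    unfolding D_def by (auto intro!: derivative_eq_intros dE simp: algebra_simps)
  have dB: "(B has_field_derivative dd * (x - R1) * \<kappa> * E t / (D t)^2) (at t)" if "t \<in> S" for t
    using Sprop[OF that] unfolding B'
    by (auto intro!: derivative_eq_intros dD simp: power2_eq_square field_simps)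
  have phiR1: "\<phi> t - R1 = dd * (x - R1) * E t / D t" if "t \<in> S" for t
    using Sprop[OF that] unfolding \<phi>_def by (simp add: field_simps D_def dd_def)
  have phiR2: "\<phi> t - R2 = dd * (x - R2) / D t" for t
    unfolding \<phi>_def by simp
  have dphi: "(\<phi> has_field_derivative of_nat a * (\<phi> t - R1) * (\<phi> t - R2)) (at t)" if "t \<in> S" for t
    unfolding phiR1[OF that] phiR2 using Sprop[OF that] unfolding \<phi>_def
    by (auto intro!: derivative_eq_intros dD simp: power2_eq_square field_simps \<kappa>)
  have df: "(f has_field_derivative f t * (of_nat al0 * \<phi> t + of_nat ga0)) (at t)" if "t \<in> S" for t
  proof -
    have "((\<lambda>t. lam * t + s * Ln (B t)) has_field_derivative lam + s * (inverse (B t) * (dd * (x - R1) * \<kappa> * E t / (D t)^2))) (at t)"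
      using Sprop[OF that] by (auto intro!: derivative_eq_intros dB that)
    moreover have "lam + s * (inverse (B t) * (dd * (x - R1) * \<kappa> * E t / (D t)^2)) = of_nat al0 * \<phi> t + of_nat ga0"
    proof -
      have sk: "s * \<kappa> = of_nat al0 * dd" unfolding s_def \<kappa> using Apos by simp
      have "lam + s * (inverse (B t) * (dd * (x - R1) * \<kappa> * E t / (D t)^2)) = lam + (s * \<kappa>) * ((x - R1) * E t / D t)"
        using Sprop[OF that] ddnz unfolding B' by (simp add: field_simps power2_eq_square)
      also have "\<dots> = of_nat al0 * (R1 + dd * (x - R1) * E t / D t) + of_nat ga0"
        unfolding sk lam_def R1_def by (simp add: algebra_simps)
      also have "\<dots> = of_nat al0 * \<phi> t + of_nat ga0"
        using phiR1[OF that] by (simp add: algebra_simps)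
      finally show ?thesis .
    qed
    ultimately have "((\<lambda>t. lam * t + s * Ln (B t)) has_field_derivative of_nat al0 * \<phi> t + of_nat ga0) (at t)" by simp
    from DERIV_chain2[OF DERIV_exp this] show ?thesis unfolding f_def by (simp add: mult.commute)
  qed
  have ind: "\<forall>t\<in>S. (deriv ^^ n) f t = f t * Ppoly a b c al0 be0 ga0 n (\<phi> t)" for n
  proof (induction n)
    case 0
    then show ?case by (simp add: Ppoly_def)
  next
    case (Suc n)
    show ?case
    proof
      fix t assume t: "t \<in> S"
      have "((\<lambda>u. f u * Ppoly a b c al0 be0 ga0 n (\<phi> u)) has_field_derivative
          f t * (of_nat al0 * \<phi> t + of_nat ga0) * Ppoly a b c al0 be0 ga0 n (\<phi> t)
          + f t * (Pd a b c al0 be0 ga0 n (\<phi> t) * (of_nat a * (\<phi> t - R1) * (\<phi> t - R2)))) (at t)"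
        by (rule DERIV_cong[OF DERIV_mult[OF df[OF t] DERIV_chain2[OF Ppoly_deriv dphi[OF t]]]]) (simp add: algebra_simps)
      moreover have "f t * (of_nat al0 * \<phi> t + of_nat ga0) * Ppoly a b c al0 be0 ga0 n (\<phi> t)
          + f t * (Pd a b c al0 be0 ga0 n (\<phi> t) * (of_nat a * (\<phi> t - R1) * (\<phi> t - R2)))
          = f t * Ppoly a b c al0 be0 ga0 (Suc n) (\<phi> t)"
        unfolding Ppoly_rec[OF balanced] qfac by (simp add: algebra_simps)
      ultimately have "((\<lambda>u. f u * Ppoly a b c al0 be0 ga0 n (\<phi> u)) has_field_derivative
          f t * Ppoly a b c al0 be0 ga0 (Suc n) (\<phi> t)) (at t)" by simp
      hence "((deriv ^^ n) f has_field_derivative f t * Ppoly a b c al0 be0 ga0 (Suc n) (\<phi> t)) (at t)"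
        by (rule has_field_derivative_transform_within_open[OF _ oS t]) (use Suc in auto)
      thus "(deriv ^^ Suc n) f t = f t * Ppoly a b c al0 be0 ga0 (Suc n) (\<phi> t)"
        by (simp add: DERIV_imp_deriv)
    qed
  qed
  have hol: "f holomorphic_on S" using df oS by (auto simp: holomorphic_on_open)
  have zS: "0 \<in> S" unfolding S_def using ep by simp
  have f0: "f 0 = 1" unfolding f_def B0 by simp
  have phi0: "\<phi> 0 = x" unfolding \<phi>_def D0 using ddnz by simp
  show "\<exists>\<epsilon>>0. \<forall>t::complex. norm t < \<epsilon> \<longrightarrow>
     (\<lambda>n. Ppoly a b c al0 be0 ga0 n x * t ^ n / of_nat (fact n)) sums
       (exp (complex_of_real (real al0 * r1 + real ga0) * t) *
        ((complex_of_real (r1 - r2) /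
          ((x - complex_of_real r2) - (x - complex_of_real r1) * exp (complex_of_real (real a * (r1 - r2)) * t)))
         powr complex_of_real (real al0 / real a)))"
  proof (intro exI conjI allI impI)
    show "\<epsilon> > 0" by (rule ep)
    fix t :: complex assume "norm t < \<epsilon>"
    hence t: "t \<in> S" unfolding S_def by simp
    have "(\<lambda>n. (deriv ^^ n) f 0 / fact n * (t - 0)^n) sums f t"
      using holomorphic_power_series[OF hol[unfolded S_def] t[unfolded S_def]] .
    moreover have "(deriv ^^ n) f 0 / fact n * (t - 0)^n = Ppoly a b c al0 be0 ga0 n x * t ^ n / of_nat (fact n)" for n
    proof -
      have "(deriv ^^ n) f 0 = Ppoly a b c al0 be0 ga0 n x" using ind[of n] zS f0 phi0 by simp
      thus ?thesis by (simp add: of_nat_fact)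
    qed
    moreover have "f t = exp (lam * t) * (B t powr s)"
      using Sprop[OF t] unfolding f_def by (simp add: powr_def exp_add mult.commute)
    ultimately show "(\<lambda>n. Ppoly a b c al0 be0 ga0 n x * t ^ n / of_nat (fact n)) sums
       (exp (complex_of_real (real al0 * r1 + real ga0) * t) *
        ((complex_of_real (r1 - r2) /
          ((x - complex_of_real r2) - (x - complex_of_real r1) * exp (complex_of_real (real a * (r1 - r2)) * t)))
         powr complex_of_real (real al0 / real a)))"
      unfolding lam_def B_def D_def E_def s_def \<kappa>_def R1_def R2_def by (simp only:)
  qed
qed
end
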